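(* Let $\mathcal R$ be the set of isomorphism classes of rooted trees, and for $T_0\in\mathcal R$ let $v(T_0)$ be its number of (non-root) vertices and $n(T_0)$ its number of leaves. Then, as formal power series in $x$, $$\sum_{T_0\in\mathcal R}\frac{(-1)^{v(T_0)}x^{n(T_0)}}{|\mathrm{Aut}(T_0)|}=\log(1+x)=\sum_{n\ge1}\frac{(-1)^{n+1}}{n}x^n.$$
   Context: A rooted tree is a finite connected acyclic graph with one distinguished extra univalent end called the root and at least one further free end called a leaf (a leaf is a dangling half-edge, not counted as a vertex), such that every vertex other than the root has degree at least $3$; the root is not counted among the vertices. The smallest rooted tree consists of the root joined directly to a single leaf, with no vertices. $\mathrm{Aut}(T_0)$ is the group of graph automorphisms of $T_0$ fixing the root (leaves are unlabeled and may be permuted). For example, the rooted trees with one vertex and $n\ge2$ leaves contribute $(-1)\,x^n/n!$, and the rooted tree whose vertex adjacent to the root carries one leaf and one further vertex carrying two leaves contributes $(+1)\,x^3/2$. *)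

theory Defs
  imports Main "HOL-Computational_Algebra.Formal_Power_Series"
begin

text \<open>Concrete (plane) representatives of rooted trees. The root half-edge is attached
  to the node at position []; a node with no children is a leaf (free end), a node
  with children is a (non-root) vertex.\<close>

datatype ptree = PNode "ptree list"

fun children :: "ptree \<Rightarrow> ptree list" where
  "children (PNode ts) = ts"

fun subt :: "ptree \<Rightarrow> nat list \<Rightarrow> ptree option" where
  "subt t [] = Some t"
| "subt (PNode ts) (i # p) = (if i < length ts then subt (ts ! i) p else None)"

definition pos :: "ptree \<Rightarrow> nat list set" where
  "pos t = {p. subt t p \<noteq> None}"

definition nchildren :: "ptree \<Rightarrow> nat list \<Rightarrow> nat" where
  "nchildren t p = length (children (the (subt t p)))"

text \<open>Every non-root vertex has degree at least 3, i.e. at least 2 children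
  (its parent edge counts 1); leaves have no children.\<close>
definition valid_rtree :: "ptree \<Rightarrow> bool" where
  "valid_rtree t \<longleftrightarrow> (\<forall>p\<in>pos t. nchildren t p = 0 \<or> nchildren t p \<ge> 2)"

definition nleaves :: "ptree \<Rightarrow> nat" where
  "nleaves t = card {p \<in> pos t. nchildren t p = 0}"

definition nverts :: "ptree \<Rightarrow> nat" where
  "nverts t = card {p \<in> pos t. nchildren t p \<noteq> 0}"

text \<open>Adjacency in the underlying graph (positions are nodes, edges join a node to
  its parent). The root end is adjacent exactly to position [].\<close>
definition adj :: "nat list \<Rightarrow> nat list \<Rightarrow> bool" where
  "adj p q \<longleftrightarrow> (q \<noteq> [] \<and> p = butlast q) \<or> (p \<noteq> [] \<and> q = butlast p)"

text \<open>Graph isomorphisms fixing the root (the root end is fixed iff its neighbour [] is).\<close>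
definition tree_iso :: "ptree \<Rightarrow> ptree \<Rightarrow> (nat list \<Rightarrow> nat list) \<Rightarrow> bool" where
  "tree_iso s t f \<longleftrightarrow> bij_betw f (pos s) (pos t) \<and> f [] = [] \<and>
     (\<forall>p\<in>pos s. \<forall>q\<in>pos s. adj p q \<longleftrightarrow> adj (f p) (f q))"

definition iso_rel :: "(ptree \<times> ptree) set" where
  "iso_rel = {(s, t). valid_rtree s \<and> valid_rtree t \<and> (\<exists>f. tree_iso s t f)}"

definition Aut :: "ptree \<Rightarrow> (nat list \<Rightarrow> nat list) set" where
  "Aut t = {f. tree_iso t t f \<and> (\<forall>p. p \<notin> pos t \<longrightarrow> f p = p)}"

definition rtree_classes :: "ptree set set" where
  "rtree_classes = {t. valid_rtree t} // iso_rel"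

definition rep :: "ptree set \<Rightarrow> ptree" where
  "rep C = (SOME t. t \<in> C)"

definition rtree_gf :: "real fps" where
  "rtree_gf = Abs_fps (\<lambda>n. \<Sum>C \<in> {C \<in> rtree_classes. nleaves (rep C) = n}.
      (-1) ^ nverts (rep C) / real (card (Aut (rep C))))"

end

theory Submission
  imports Defs "HOL-Combinatorics.Permutations"
begin
unbundle fps_syntax

lemma subt_append: "subt t (p @ q) = (case subt t p of None \<Rightarrow> None | Some t' \<Rightarrow> subt t' q)"
proof (induction p arbitrary: t)
  case Nil then show ?case by simp
next
  case (Cons i p) then show ?case by (cases t) auto
qed

lemma pos_PNode: "pos (PNode ts) = insert [] (\<Union>i<length ts. (#) i ` pos (ts!i))"
proof (intro set_eqI iffI)
  fix x assume "x \<in> pos (PNode ts)"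
  then show "x \<in> insert [] (\<Union>i<length ts. (#) i ` pos (ts!i))"
    by (cases x) (auto simp: pos_def split: if_splits)
qed (auto simp: pos_def)

lemma Nil_pos[simp]: "[] \<in> pos t" by (simp add: pos_def)

lemma Cons_pos[simp]: "i # p \<in> pos (PNode ts) \<longleftrightarrow> i < length ts \<and> p \<in> pos (ts!i)"
  by (auto simp: pos_def)

lemma pos_take: "p \<in> pos t \<Longrightarrow> take j p \<in> pos t"
proof -
  assume "p \<in> pos t"
  then have "subt t (take j p @ drop j p) \<noteq> None" by (simp add: pos_def)
  then show ?thesis unfolding subt_append pos_def
    by (cases "subt t (take j p)") auto
qed

lemma pos_butlast: "p \<in> pos t \<Longrightarrow> butlast p \<in> pos t"
  by (simp add: butlast_conv_take pos_take)

lemma finite_pos: "finite (pos t)"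
proof (induction t)
  case (PNode ts)
  then show ?case by (simp add: pos_PNode)
qed

lemma nchildren_Nil[simp]: "nchildren (PNode ts) [] = length ts"
  by (simp add: nchildren_def)

lemma nchildren_Cons[simp]: "i < length ts \<Longrightarrow> nchildren (PNode ts) (i # p) = nchildren (ts!i) p"
  by (simp add: nchildren_def)

lemma card_pos_Q:
  "card {p \<in> pos (PNode ts). Q (nchildren (PNode ts) p)} =
    (if Q (length ts) then 1 else 0) + (\<Sum>i<length ts. card {p \<in> pos (ts!i). Q (nchildren (ts!i) p)})"
proof -
  have eq: "{p \<in> pos (PNode ts). Q (nchildren (PNode ts) p)} =
     (if Q (length ts) then {[]} else {}) \<union> (\<Union>i<length ts. (#) i ` {p \<in> pos (ts!i). Q (nchildren (ts!i) p)})"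
    by (auto simp: pos_PNode)
  have "card (\<Union>i<length ts. (#) i ` {p \<in> pos (ts!i). Q (nchildren (ts!i) p)}) =
     (\<Sum>i<length ts. card ((#) i ` {p \<in> pos (ts!i). Q (nchildren (ts!i) p)}))"
    by (rule card_UN_disjoint) (auto simp: finite_pos)
  also have "\<dots> = (\<Sum>i<length ts. card {p \<in> pos (ts!i). Q (nchildren (ts!i) p)})"
    by (intro sum.cong refl card_image) auto
  finally show ?thesis unfolding eq
    by (subst card_Un_disjoint) (auto simp: finite_pos)
qed

lemma nleaves_PNode: "nleaves (PNode ts) = (if ts = [] then 1 else 0) + (\<Sum>i<length ts. nleaves (ts!i))"
  unfolding nleaves_def using card_pos_Q[where Q="\<lambda>n. n = 0" and ts=ts] by simp

lemma nverts_PNode: "nverts (PNode ts) = (if ts = [] then 0 else 1) + (\<Sum>i<length ts. nverts (ts!i))"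
  unfolding nverts_def using card_pos_Q[where Q="\<lambda>n. n \<noteq> 0" and ts=ts] by simp

lemma valid_PNode: "valid_rtree (PNode ts) \<longleftrightarrow> length ts \<noteq> 1 \<and> (\<forall>i<length ts. valid_rtree (ts!i))"
proof -
  have "(length ts = 0 \<or> 2 \<le> length ts) \<longleftrightarrow> length ts \<noteq> 1" by arith
  then show ?thesis unfolding valid_rtree_def pos_PNode by auto
qed


definition TK :: "ptree \<Rightarrow> ptree \<Rightarrow> (nat list \<Rightarrow> nat list) \<Rightarrow> bool" where
  "TK s t f \<longleftrightarrow> bij_betw f (pos s) (pos t) \<and>
     (\<forall>p\<in>pos s. length (f p) = length p \<and> (\<forall>j. f (take j p) = take j (f p)))"

lemma tree_iso_imp_TK:
  assumes iso: "tree_iso s t f"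
  shows "TK s t f"
proof -
  have bij: "bij_betw f (pos s) (pos t)" and f0: "f [] = []"
    and adjf: "\<And>p q. p \<in> pos s \<Longrightarrow> q \<in> pos s \<Longrightarrow> adj p q \<longleftrightarrow> adj (f p) (f q)"
    using iso by (auto simp: tree_iso_def)
  have inj: "inj_on f (pos s)" using bij by (simp add: bij_betw_def)
  have key: "\<forall>p\<in>pos s. length p = n \<longrightarrow> length (f p) = n \<and> (p \<noteq> [] \<longrightarrow> f (butlast p) = butlast (f p))" for n
  proof (induction n)
    case 0
    then show ?case using f0 by auto
  next
    case (Suc n)
    show ?case
    proof (intro ballI impI)
      fix p assume p: "p \<in> pos s" and lp: "length p = Suc n"
      define q where "q = butlast p"
      have q: "q \<in> pos s" "length q = n" using p lp by (auto simp: q_def pos_butlast)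
      have pne: "p \<noteq> []" using lp by auto
      have IH: "length (f q) = n" "q \<noteq> [] \<Longrightarrow> f (butlast q) = butlast (f q)" using Suc.IH q by blast+
      have "adj q p" using pne by (simp add: adj_def q_def)
      then have "adj (f q) (f p)" using adjf[OF q(1) p] by simp
      then consider "f p \<noteq> [] \<and> f q = butlast (f p)" | "f q \<noteq> [] \<and> f p = butlast (f q)"
        by (auto simp: adj_def)
      then show "length (f p) = Suc n \<and> (p \<noteq> [] \<longrightarrow> f (butlast p) = butlast (f p))"
      proof cases
        case 1
        then show ?thesis using IH(1) by (auto simp: q_def)
      next
        case 2
        then have "n \<noteq> 0" using IH(1) by auto
        then have qne: "q \<noteq> []" using q(2) by auto
        have "f (butlast q) = f p" using IH(2)[OF qne] 2 by simp
        moreover have "butlast q \<in> pos s" using q(1) by (rule pos_butlast)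
        ultimately have "butlast q = p" using inj p by (auto dest: inj_onD)
        moreover have "length (butlast q) = n - 1" using q(2) by simp
        ultimately have False using lp by simp
        then show ?thesis ..
      qed
    qed
  qed
  have len: "p \<in> pos s \<Longrightarrow> length (f p) = length p" for p using key by blast
  have bl: "p \<in> pos s \<Longrightarrow> p \<noteq> [] \<Longrightarrow> f (butlast p) = butlast (f p)" for p using key by blast
  have tk: "\<forall>p\<in>pos s. length p - j = d \<longrightarrow> f (take j p) = take j (f p)" for j d
  proof (induction d)
    case 0
    then show ?case using len by auto
  next
    case (Suc d)
    show ?case
    proof (intro ballI impI)
      fix p assume p: "p \<in> pos s" and d: "length p - j = Suc d"
      then have jl: "j < length p" by auto
      then have pne: "p \<noteq> []" by auto
      have "f (take j p) = f (take j (butlast p))" using jl by (simp add: take_butlast)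
      also have "\<dots> = take j (f (butlast p))"
      proof -
        have "length (butlast p) - j = d" using d by simp
        then show ?thesis using Suc.IH pos_butlast[OF p] by blast
      qed
      also have "\<dots> = take j (f p)" using bl[OF p pne] jl len[OF p] by (simp add: take_butlast)
      finally show "f (take j p) = take j (f p)" .
    qed
  qed
  show ?thesis unfolding TK_def using bij len tk by blast
qed

lemma TK_imp_tree_iso:
  assumes tk: "TK s t f"
  shows "tree_iso s t f"
proof -
  have bij: "bij_betw f (pos s) (pos t)" and len: "\<And>p. p \<in> pos s \<Longrightarrow> length (f p) = length p"
    and tk': "\<And>p j. p \<in> pos s \<Longrightarrow> f (take j p) = take j (f p)"
    using tk by (auto simp: TK_def)
  have inj: "inj_on f (pos s)" using bij by (simp add: bij_betw_def)
  have f0: "f [] = []" using tk'[of "[]" 0] by simp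
  have bl: "p \<in> pos s \<Longrightarrow> f (butlast p) = butlast (f p)" for p
    using tk'[of p "length p - 1"] len[of p] by (simp add: butlast_conv_take)
  have ne: "p \<in> pos s \<Longrightarrow> f p = [] \<longleftrightarrow> p = []" for p using len[of p] by auto
  have "adj p q \<longleftrightarrow> adj (f p) (f q)" if p: "p \<in> pos s" and q: "q \<in> pos s" for p q
  proof -
    have A: "(q \<noteq> [] \<and> p = butlast q) \<longleftrightarrow> (f q \<noteq> [] \<and> f p = butlast (f q))" if p: "p \<in> pos s" and q: "q \<in> pos s" for p q
    proof
      assume "q \<noteq> [] \<and> p = butlast q"
      then show "f q \<noteq> [] \<and> f p = butlast (f q)" using ne[OF q] bl[OF q] by auto
    next
      assume h: "f q \<noteq> [] \<and> f p = butlast (f q)"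
      then have "f p = f (butlast q)" using bl[OF q] by simp
      then have "p = butlast q" using inj p pos_butlast[OF q] by (auto dest: inj_onD)
      then show "q \<noteq> [] \<and> p = butlast q" using h ne[OF q] by auto
    qed
    show ?thesis unfolding adj_def using A[OF p q] A[OF q p] by blast
  qed
  then show ?thesis unfolding tree_iso_def using bij f0 by blast
qed

lemma tree_iso_TK: "tree_iso s t f \<longleftrightarrow> TK s t f"
  using tree_iso_imp_TK TK_imp_tree_iso by blast

lemma TK_cong: assumes "TK s t f" "\<And>p. p \<in> pos s \<Longrightarrow> f p = g p" shows "TK s t g"
proof -
  have "bij_betw g (pos s) (pos t)" using assms bij_betw_cong[of "pos s" f g "pos t"] by (simp add: TK_def)
  moreover have "length (g p) = length p \<and> (\<forall>j. g (take j p) = take j (g p))" if p: "p \<in> pos s" for p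
    using assms(1) assms(2)[OF p] assms(2)[OF pos_take[OF p]] p unfolding TK_def by metis
  ultimately show ?thesis unfolding TK_def by blast
qed

lemma TK_id: "TK s s id"
  by (simp add: TK_def)

lemma TK_comp: assumes f: "TK s t f" and g: "TK t u g" shows "TK s u (g \<circ> f)"
proof -
  have "bij_betw (g \<circ> f) (pos s) (pos u)" using f g by (auto simp: TK_def intro: bij_betw_trans)
  moreover have "length (g (f p)) = length p \<and> (\<forall>j. g (f (take j p)) = take j (g (f p)))" if p: "p \<in> pos s" for p
  proof -
    have fp: "f p \<in> pos t" using f p by (auto simp: TK_def bij_betw_apply)
    show ?thesis using f g p fp unfolding TK_def by metis
  qed
  ultimately show ?thesis unfolding TK_def by simp
qed

lemma TK_inv: assumes "TK s t f" shows "TK t s (inv_into (pos s) f)"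
proof -
  have bij: "bij_betw f (pos s) (pos t)" and len: "\<And>p. p \<in> pos s \<Longrightarrow> length (f p) = length p"
    and tk': "\<And>p j. p \<in> pos s \<Longrightarrow> f (take j p) = take j (f p)"
    using assms by (auto simp: TK_def)
  have inj: "inj_on f (pos s)" using bij by (simp add: bij_betw_def)
  have "length (inv_into (pos s) f q) = length q \<and> (\<forall>j. inv_into (pos s) f (take j q) = take j (inv_into (pos s) f q))"
    if q: "q \<in> pos t" for q
  proof -
    obtain p where p: "p \<in> pos s" "q = f p" using q bij by (auto simp: bij_betw_def)
    have ip: "inv_into (pos s) f q = p" using p inj by simp
    have "inv_into (pos s) f (take j q) = take j p" for j
      using tk'[OF p(1), of j] p inj pos_take[OF p(1), of j] by (metis inv_into_f_f)
    then show ?thesis using ip len p by simp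
  qed
  then show ?thesis unfolding TK_def using bij_betw_inv_into[OF bij] by blast
qed

definition Iso :: "ptree \<Rightarrow> ptree \<Rightarrow> (nat list \<Rightarrow> nat list) set" where
  "Iso s t = {f. TK s t f \<and> (\<forall>p. p \<notin> pos s \<longrightarrow> f p = p)}"

lemma Aut_Iso: "Aut t = Iso t t"
  by (simp add: Aut_def Iso_def tree_iso_TK)

lemma ex_tree_iso_Iso: "(\<exists>f. tree_iso s t f) \<longleftrightarrow> Iso s t \<noteq> {}"
proof
  assume "\<exists>f. tree_iso s t f"
  then obtain f where f: "TK s t f" by (auto simp: tree_iso_TK)
  define g where "g p = (if p \<in> pos s then f p else p)" for p
  have "TK s t g" using f by (rule TK_cong) (simp add: g_def)
  then have "g \<in> Iso s t" by (simp add: Iso_def g_def)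
  then show "Iso s t \<noteq> {}" by blast
qed (auto simp: Iso_def tree_iso_TK)

lemma id_Iso: "id \<in> Iso t t"
  by (simp add: Iso_def TK_id)

lemma card_Iso_Aut:
  assumes h: "h \<in> Iso t s"
  shows "card (Iso t s) = card (Iso t t)"
proof -
  have hT: "TK t s h" and hout: "\<And>p. p \<notin> pos t \<Longrightarrow> h p = p" using h by (auto simp: Iso_def)
  have hbij: "bij_betw h (pos t) (pos s)" using hT by (simp add: TK_def)
  define hi where "hi = inv_into (pos t) h"
  have hiT: "TK s t hi" using TK_inv[OF hT] by (simp add: hi_def)
  define G where "G g = (\<lambda>p. if p \<in> pos t then hi (g p) else p)" for g :: "nat list \<Rightarrow> nat list"
  have "bij_betw (\<lambda>a. h \<circ> a) (Iso t t) (Iso t s)"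
  proof (rule bij_betw_byWitness[where f' = G])
    show "\<forall>a\<in>Iso t t. G (h \<circ> a) = a"
    proof
      fix a assume a: "a \<in> Iso t t"
      then have "a p \<in> pos t" if "p \<in> pos t" for p using that by (auto simp: Iso_def TK_def bij_betw_apply)
      then show "G (h \<circ> a) = a"
      proof -
        have "G (h \<circ> a) p = a p" for p
        proof (cases "p \<in> pos t")
          case True
          then have "a p \<in> pos t" using \<open>\<And>p. p \<in> pos t \<Longrightarrow> a p \<in> pos t\<close> by blast
          then show ?thesis using True hbij by (simp add: G_def hi_def bij_betw_def)
        next
          case False
          then show ?thesis using a by (simp add: G_def Iso_def)
        qed
        then show ?thesis by blast
      qed
    qed
    show "\<forall>g\<in>Iso t s. h \<circ> G g = g"
    proof
      fix g assume g: "g \<in> Iso t s"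
      then have "g p \<in> pos s" if "p \<in> pos t" for p using that by (auto simp: Iso_def TK_def bij_betw_apply)
      then show "h \<circ> G g = g"
      proof -
        have "h (G g p) = g p" for p
        proof (cases "p \<in> pos t")
          case True
          then have "g p \<in> pos s" using \<open>\<And>p. p \<in> pos t \<Longrightarrow> g p \<in> pos s\<close> by blast
          then have "g p \<in> h ` pos t" using hbij by (simp add: bij_betw_def)
          then show ?thesis using True by (simp add: G_def hi_def f_inv_into_f)
        next
          case False
          then show ?thesis using g hout by (simp add: G_def Iso_def)
        qed
        then show ?thesis by (simp add: fun_eq_iff)
      qed
    qed
    show "(\<lambda>a. h \<circ> a) ` Iso t t \<subseteq> Iso t s"
      using hT hout by (auto simp: Iso_def intro: TK_comp)
    show "G ` Iso t s \<subseteq> Iso t t"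
    proof
      fix a assume "a \<in> G ` Iso t s"
      then obtain g where g: "g \<in> Iso t s" and a: "a = G g" by auto
      have "TK t t (hi \<circ> g)" using g hiT by (auto simp: Iso_def intro: TK_comp)
      then have "TK t t a" by (rule TK_cong) (simp add: a G_def)
      then show "a \<in> Iso t t" by (simp add: Iso_def a G_def)
    qed
  qed
  then show ?thesis by (simp add: bij_betw_same_card)
qed


lemma Iso_TK: "f \<in> Iso s t \<Longrightarrow> TK s t f" by (simp add: Iso_def)
lemma Iso_out: "f \<in> Iso s t \<Longrightarrow> p \<notin> pos s \<Longrightarrow> f p = p" by (simp add: Iso_def)

lemma TK_in: "TK s t f \<Longrightarrow> p \<in> pos s \<Longrightarrow> f p \<in> pos t"
  by (auto simp: TK_def bij_betw_apply)
lemma TK_len: "TK s t f \<Longrightarrow> p \<in> pos s \<Longrightarrow> length (f p) = length p"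
  by (auto simp: TK_def)
lemma TK_take: "TK s t f \<Longrightarrow> p \<in> pos s \<Longrightarrow> f (take j p) = take j (f p)"
  by (auto simp: TK_def)
lemma TK_inj: "TK s t f \<Longrightarrow> p \<in> pos s \<Longrightarrow> q \<in> pos s \<Longrightarrow> f p = f q \<Longrightarrow> p = q"
  by (auto simp: TK_def bij_betw_def dest: inj_onD)
lemma TK_surj: "TK s t f \<Longrightarrow> q \<in> pos t \<Longrightarrow> \<exists>p\<in>pos s. f p = q"
  unfolding TK_def bij_betw_def by (metis imageE)
lemma TK_Nil: "TK s t f \<Longrightarrow> f [] = []"
  using TK_take[of s t f "[]" 0] by simp

lemma TK_bijI:
  assumes "\<And>p. p \<in> pos s \<Longrightarrow> f p \<in> pos t"
    and "\<And>p q. p \<in> pos s \<Longrightarrow> q \<in> pos s \<Longrightarrow> f p = f q \<Longrightarrow> p = q"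
    and "\<And>q. q \<in> pos t \<Longrightarrow> \<exists>p\<in>pos s. f p = q"
    and "\<And>p. p \<in> pos s \<Longrightarrow> length (f p) = length p"
    and "\<And>p j. p \<in> pos s \<Longrightarrow> f (take j p) = take j (f p)"
  shows "TK s t f"
proof -
  have "bij_betw f (pos s) (pos t)"
    unfolding bij_betw_def inj_on_def using assms(1-3) by blast
  then show ?thesis unfolding TK_def using assms(4,5) by blast
qed

definition sg :: "ptree list \<Rightarrow> (nat list \<Rightarrow> nat list) \<Rightarrow> nat \<Rightarrow> nat" where
  "sg ts f i = (if i < length ts then hd (f [i]) else i)"
definition gg :: "ptree list \<Rightarrow> (nat list \<Rightarrow> nat list) \<Rightarrow> nat \<Rightarrow> nat list \<Rightarrow> nat list" where
  "gg ts f i p = (if p \<in> pos (ts!i) then tl (f (i#p)) else p)"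

context
  fixes ts :: "ptree list" and s :: ptree and f :: "nat list \<Rightarrow> nat list"
  assumes fI: "f \<in> Iso (PNode ts) s"
begin


lemma fT: "TK (PNode ts) s f" using fI by (rule Iso_TK)

lemma f_single: "i < length ts \<Longrightarrow> f [i] = [sg ts f i]"
proof -
  assume i: "i < length ts"
  have "[i] \<in> pos (PNode ts)" using i by simp
  then have "length (f [i]) = 1" using TK_len[OF fT] by fastforce
  then show ?thesis using i unfolding sg_def by (cases "f [i]") auto
qed

lemma f_Cons: "i < length ts \<Longrightarrow> p \<in> pos (ts!i) \<Longrightarrow> f (i#p) = sg ts f i # gg ts f i p"
proof -
  assume i: "i < length ts" and p: "p \<in> pos (ts!i)"
  have ip: "i#p \<in> pos (PNode ts)" using i p by simp
  have "take 1 (f (i#p)) = f (take 1 (i#p))" using TK_take[OF fT ip, of 1] by simp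
  also have "\<dots> = [sg ts f i]" using f_single[OF i] by simp
  finally have "take 1 (f (i#p)) = [sg ts f i]" .
  then show ?thesis unfolding gg_def using p by (cases "f (i#p)") auto
qed

lemma s_shape: "s = PNode (children s)" by (cases s) simp

lemma sg_lt: "i < length ts \<Longrightarrow> sg ts f i < length (children s)"
proof -
  assume i: "i < length ts"
  have "f [i] \<in> pos s" using TK_in[OF fT] i by simp
  then have "[sg ts f i] \<in> pos (PNode (children s))" using f_single[OF i] s_shape by simp
  then show ?thesis by simp
qed

lemma sg_bij: "bij_betw (sg ts f) {..<length ts} {..<length (children s)}"
proof -
  have "inj_on (sg ts f) {..<length ts}"
  proof (rule inj_onI)
    fix i j assume i: "i \<in> {..<length ts}" and j: "j \<in> {..<length ts}" and e: "sg ts f i = sg ts f j"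
    have "f [i] = f [j]" using f_single i j e by simp
    then show "i = j" using TK_inj[OF fT, of "[i]" "[j]"] i j by simp
  qed
  moreover have "(sg ts f) ` {..<length ts} = {..<length (children s)}"
  proof
    show "(sg ts f) ` {..<length ts} \<subseteq> {..<length (children s)}" using sg_lt by auto
    show "{..<length (children s)} \<subseteq> (sg ts f) ` {..<length ts}"
    proof
      fix j assume j: "j \<in> {..<length (children s)}"
      then have "[j] \<in> pos (PNode (children s))" by simp
      then have "[j] \<in> pos s" using s_shape by simp
      then obtain r where r: "r \<in> pos (PNode ts)" "f r = [j]" using TK_surj[OF fT] by blast
      have "length r = 1" using TK_len[OF fT r(1)] r(2) by simp
      then obtain i where ri: "r = [i]" by (cases r) auto
      then have i: "i < length ts" using r(1) by simp
      then have "sg ts f i = j" using f_single[OF i] r(2) ri by simp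
      then show "j \<in> (sg ts f) ` {..<length ts}" using i by auto
    qed
  qed
  ultimately show ?thesis by (simp add: bij_betw_def)
qed

lemma len_children: "length (children s) = length ts"
  using bij_betw_same_card[OF sg_bij] by simp

lemma sg_permutes: "sg ts f permutes {..<length ts}"
  using sg_bij len_children by (intro bij_imp_permutes) (auto simp: sg_def)

lemma gg_Iso: "i < length ts \<Longrightarrow> gg ts f i \<in> Iso (ts!i) (children s ! sg ts f i)"
proof -
  assume i: "i < length ts"
  let ?t = "ts!i" and ?u = "children s ! sg ts f i"
  have sgi: "sg ts f i < length (children s)" using sg_lt[OF i] .
  have in_s: "f (i#p) \<in> pos (PNode (children s))" if "p \<in> pos ?t" for p
    using TK_in[OF fT] i that s_shape by (metis Cons_pos)
  have "TK ?t ?u (gg ts f i)"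
  proof (rule TK_bijI)
    fix p assume p: "p \<in> pos ?t"
    show "gg ts f i p \<in> pos ?u" using in_s[OF p] f_Cons[OF i p] by simp
    show "length (gg ts f i p) = length p" using TK_len[OF fT, of "i#p"] i p f_Cons[OF i p] by simp
    fix j
    have tp: "take j p \<in> pos ?t" using p by (rule pos_take)
    have "f (i # take j p) = f (take (Suc j) (i#p))" by simp
    also have "\<dots> = take (Suc j) (f (i#p))" using TK_take[OF fT, of "i#p" "Suc j"] i p by simp
    finally show "gg ts f i (take j p) = take j (gg ts f i p)"
      using f_Cons[OF i p] f_Cons[OF i tp] by simp
  next
    fix p q assume p: "p \<in> pos ?t" and q: "q \<in> pos ?t" and e: "gg ts f i p = gg ts f i q"
    then have "f (i#p) = f (i#q)" using f_Cons[OF i p] f_Cons[OF i q] by simp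
    then show "p = q" using TK_inj[OF fT, of "i#p" "i#q"] i p q by simp
  next
    fix q assume q: "q \<in> pos ?u"
    then have "sg ts f i # q \<in> pos s" using sgi s_shape by (metis Cons_pos)
    then obtain r where r: "r \<in> pos (PNode ts)" "f r = sg ts f i # q" using TK_surj[OF fT] by blast
    have "r \<noteq> []" using r TK_Nil[OF fT] by auto
    then obtain i' p where rr: "r = i' # p" by (cases r) auto
    then have i': "i' < length ts" and p: "p \<in> pos (ts!i')" using r(1) by auto
    have "sg ts f i' = sg ts f i" using f_Cons[OF i' p] r(2) rr by simp
    then have "i' = i" using sg_bij i i' by (auto simp: bij_betw_def dest: inj_onD)
    then show "\<exists>p\<in>pos ?t. gg ts f i p = q" using f_Cons[OF i' p] r(2) rr p by auto
  qed
  then show ?thesis by (simp add: Iso_def gg_def)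
qed

lemma f_eq: "f q = (case q of [] \<Rightarrow> [] | i # p \<Rightarrow> if i < length ts \<and> p \<in> pos (ts!i) then sg ts f i # gg ts f i p else i # p)"
proof (cases q)
  case Nil then show ?thesis using TK_Nil[OF fT] by simp
next
  case (Cons i p)
  then show ?thesis using f_Cons Iso_out[OF fI, of q] by auto
qed

end

lemma Iso_PNode_struct:
  assumes "f \<in> Iso (PNode ts) s"
  shows "\<exists>ss \<sigma>. s = PNode ss \<and> length ss = length ts \<and> \<sigma> permutes {..<length ts} \<and>
     (\<forall>i<length ts. Iso (ts!i) (ss ! \<sigma> i) \<noteq> {})"
  using s_shape[OF assms] len_children[OF assms] sg_permutes[OF assms] gg_Iso[OF assms] by blast


definition FF :: "ptree list \<Rightarrow> (nat \<Rightarrow> nat) \<Rightarrow> (nat \<Rightarrow> nat list \<Rightarrow> nat list) \<Rightarrow> nat list \<Rightarrow> nat list" where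
  "FF ts \<sigma> g q = (case q of [] \<Rightarrow> [] | i # p \<Rightarrow> if i < length ts \<and> p \<in> pos (ts!i) then \<sigma> i # g i p else i # p)"

lemma FF_Nil[simp]: "FF ts \<sigma> g [] = []" by (simp add: FF_def)
lemma FF_Cons: "i < length ts \<Longrightarrow> p \<in> pos (ts!i) \<Longrightarrow> FF ts \<sigma> g (i#p) = \<sigma> i # g i p"
  by (simp add: FF_def)

lemma FF_Iso:
  assumes sp: "\<sigma> permutes {..<length ts}" and len: "length ss = length ts"
    and gI: "\<And>i. i < length ts \<Longrightarrow> g i \<in> Iso (ts!i) (ss ! \<sigma> i)"
  shows "FF ts \<sigma> g \<in> Iso (PNode ts) (PNode ss)"
proof -
  have sl: "i < length ts \<Longrightarrow> \<sigma> i < length ts" for i using permutes_in_image[OF sp] by simp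
  have gT: "i < length ts \<Longrightarrow> TK (ts!i) (ss ! \<sigma> i) (g i)" for i using gI Iso_TK by blast
  have "TK (PNode ts) (PNode ss) (FF ts \<sigma> g)"
  proof (rule TK_bijI)
    fix q assume q: "q \<in> pos (PNode ts)"
    show "FF ts \<sigma> g q \<in> pos (PNode ss)"
    proof (cases q)
      case (Cons i p)
      then have i: "i < length ts" and p: "p \<in> pos (ts!i)" using q by auto
      then show ?thesis using Cons FF_Cons[OF i p] sl[OF i] len TK_in[OF gT[OF i] p] by simp
    qed simp
    show "length (FF ts \<sigma> g q) = length q"
    proof (cases q)
      case (Cons i p)
      then have i: "i < length ts" and p: "p \<in> pos (ts!i)" using q by auto
      then show ?thesis using Cons FF_Cons[OF i p] TK_len[OF gT[OF i] p] by simp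
    qed simp
    fix j
    show "FF ts \<sigma> g (take j q) = take j (FF ts \<sigma> g q)"
    proof (cases q)
      case (Cons i p)
      then have i: "i < length ts" and p: "p \<in> pos (ts!i)" using q by auto
      show ?thesis
      proof (cases j)
        case (Suc j')
        have tp: "take j' p \<in> pos (ts!i)" using p by (rule pos_take)
        show ?thesis using Cons Suc FF_Cons[OF i p] FF_Cons[OF i tp] TK_take[OF gT[OF i] p] by simp
      qed simp
    qed simp
  next
    fix q r assume q: "q \<in> pos (PNode ts)" and r: "r \<in> pos (PNode ts)" and e: "FF ts \<sigma> g q = FF ts \<sigma> g r"
    show "q = r"
    proof (cases q)
      case Nil
      then show ?thesis using e r by (cases r) (auto simp: FF_Cons)
    next
      case (Cons i p)
      then have i: "i < length ts" and p: "p \<in> pos (ts!i)" using q by auto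
      show ?thesis
      proof (cases r)
        case Nil
        then show ?thesis using e Cons FF_Cons[OF i p] by simp
      next
        case (Cons i' p')
        then have i': "i' < length ts" and p': "p' \<in> pos (ts!i')" using r by auto
        have "\<sigma> i = \<sigma> i'" and ge: "g i p = g i' p'"
          using e \<open>q = i#p\<close> Cons FF_Cons[OF i p] FF_Cons[OF i' p'] by auto
        then have ii: "i = i'" using permutes_inj[OF sp] by (auto dest: injD)
        then have "p = p'" using TK_inj[OF gT[OF i] p] p' ge by simp
        then show ?thesis using ii Cons \<open>q = i#p\<close> by simp
      qed
    qed
  next
    fix q assume q: "q \<in> pos (PNode ss)"
    show "\<exists>p\<in>pos (PNode ts). FF ts \<sigma> g p = q"
    proof (cases q)
      case Nil then show ?thesis by (intro bexI[of _ "[]"]) auto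
    next
      case (Cons j r)
      then have j: "j < length ts" and r: "r \<in> pos (ss!j)" using q len by auto
      define i where "i = inv \<sigma> j"
      have i: "i < length ts" using permutes_in_image[OF permutes_inv[OF sp]] j by (simp add: i_def)
      have si: "\<sigma> i = j" using permutes_inverses(1)[OF sp] by (simp add: i_def)
      obtain p where p: "p \<in> pos (ts!i)" "g i p = r" using TK_surj[OF gT[OF i]] r si by auto
      show ?thesis using FF_Cons[OF i p(1)] p si Cons i by (intro bexI[of _ "i#p"]) auto
    qed
  qed
  moreover have "\<forall>q. q \<notin> pos (PNode ts) \<longrightarrow> FF ts \<sigma> g q = q"
  proof (intro allI impI)
    fix q assume "q \<notin> pos (PNode ts)"
    then show "FF ts \<sigma> g q = q" by (cases q) (auto simp: FF_def)
  qed
  ultimately show ?thesis by (simp add: Iso_def)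
qed


definition Pairs :: "ptree \<Rightarrow> (ptree \<times> (nat list \<Rightarrow> nat list)) set" where
  "Pairs t = {(s, f). f \<in> Iso t s}"

definition Phi :: "ptree list \<Rightarrow> (nat \<Rightarrow> nat) \<times> (nat \<Rightarrow> ptree \<times> (nat list \<Rightarrow> nat list)) \<Rightarrow> ptree \<times> (nat list \<Rightarrow> nat list)" where
  "Phi ts x = (case x of (\<sigma>, h) \<Rightarrow>
     (PNode (map (\<lambda>j. fst (h (inv \<sigma> j))) [0..<length ts]), FF ts \<sigma> (\<lambda>i. snd (h i))))"

definition Psi :: "ptree list \<Rightarrow> ptree \<times> (nat list \<Rightarrow> nat list) \<Rightarrow> (nat \<Rightarrow> nat) \<times> (nat \<Rightarrow> ptree \<times> (nat list \<Rightarrow> nat list))" where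
  "Psi ts y = (case y of (s, f) \<Rightarrow>
     (sg ts f, \<lambda>i\<in>{..<length ts}. (children s ! sg ts f i, gg ts f i)))"

definition DD :: "ptree list \<Rightarrow> ((nat \<Rightarrow> nat) \<times> (nat \<Rightarrow> ptree \<times> (nat list \<Rightarrow> nat list))) set" where
  "DD ts = {\<sigma>. \<sigma> permutes {..<length ts}} \<times> (\<Pi>\<^sub>E i\<in>{..<length ts}. Pairs (ts!i))"

lemma Phi_in:
  assumes sp: "\<sigma> permutes {..<length ts}" and h: "h \<in> (\<Pi>\<^sub>E i\<in>{..<length ts}. Pairs (ts!i))"
  shows "snd (Phi ts (\<sigma>, h)) \<in> Iso (PNode ts) (fst (Phi ts (\<sigma>, h)))"
    and "\<And>i. i < length ts \<Longrightarrow> map (\<lambda>j. fst (h (inv \<sigma> j))) [0..<length ts] ! \<sigma> i = fst (h i)"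
proof -
  show e: "map (\<lambda>j. fst (h (inv \<sigma> j))) [0..<length ts] ! \<sigma> i = fst (h i)" if i: "i < length ts" for i
  proof -
    have "\<sigma> i < length ts" using permutes_in_image[OF sp] i by simp
    then show ?thesis using permutes_inverses(2)[OF sp] by simp
  qed
  have "FF ts \<sigma> (\<lambda>i. snd (h i)) \<in> Iso (PNode ts) (PNode (map (\<lambda>j. fst (h (inv \<sigma> j))) [0..<length ts]))"
  proof (rule FF_Iso[OF sp])
    fix i assume i: "i < length ts"
    have "h i \<in> Pairs (ts!i)" using h i by auto
    then show "snd (h i) \<in> Iso (ts ! i) (map (\<lambda>j. fst (h (inv \<sigma> j))) [0..<length ts] ! \<sigma> i)"
      using e[OF i] by (auto simp: Pairs_def)
  qed simp
  then show "snd (Phi ts (\<sigma>, h)) \<in> Iso (PNode ts) (fst (Phi ts (\<sigma>, h)))" by (simp add: Phi_def)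
qed

lemma Phi_bij: "bij_betw (Phi ts) (DD ts) (Pairs (PNode ts))"
proof (rule bij_betw_byWitness[where f' = "Psi ts"])
  show "\<forall>x\<in>DD ts. Psi ts (Phi ts x) = x"
  proof
    fix x assume xD: "x \<in> DD ts"
    obtain \<sigma> h where x: "x = (\<sigma>, h)" by (cases x)
    have sp: "\<sigma> permutes {..<length ts}" and h: "h \<in> (\<Pi>\<^sub>E i\<in>{..<length ts}. Pairs (ts!i))"
      using xD unfolding x DD_def mem_Times_iff by simp_all
    define ss where "ss = map (\<lambda>j. fst (h (inv \<sigma> j))) [0..<length ts]"
    define f where "f = FF ts \<sigma> (\<lambda>i. snd (h i))"
    have Ph: "Phi ts (\<sigma>, h) = (PNode ss, f)" unfolding Phi_def ss_def f_def by simp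
    have ssi: "i < length ts \<Longrightarrow> ss ! \<sigma> i = fst (h i)" for i
      unfolding ss_def by (rule Phi_in(2)[OF sp h])
    have hT: "i < length ts \<Longrightarrow> snd (h i) \<in> Iso (ts!i) (fst (h i))" for i
    proof -
      assume i: "i < length ts"
      then have "h i \<in> Pairs (ts!i)" using h by blast
      then show ?thesis unfolding Pairs_def by (cases "h i") simp
    qed
    have sgeq: "sg ts f i = \<sigma> i" for i
    proof (cases "i < length ts")
      case True
      have "f [i] = \<sigma> i # snd (h i) []" unfolding f_def by (rule FF_Cons[OF True Nil_pos])
      also have "snd (h i) [] = []" by (rule TK_Nil[OF Iso_TK[OF hT[OF True]]])
      finally show ?thesis using True by (simp add: sg_def)
    next
      case False
      then have "\<sigma> i = i" using permutes_not_in[OF sp] by simp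
      then show ?thesis using False by (simp add: sg_def)
    qed
    have ggeq: "gg ts f i p = snd (h i) p" if i: "i < length ts" for i p
    proof (cases "p \<in> pos (ts!i)")
      case True
      have "f (i#p) = \<sigma> i # snd (h i) p" unfolding f_def by (rule FF_Cons[OF i True])
      then show ?thesis using True by (simp add: gg_def)
    next
      case False
      then show ?thesis using Iso_out[OF hT[OF i] False] by (simp add: gg_def)
    qed
    have hh: "(\<lambda>i\<in>{..<length ts}. (children (PNode ss) ! sg ts f i, gg ts f i)) = h"
    proof
      fix i show "(\<lambda>i\<in>{..<length ts}. (children (PNode ss) ! sg ts f i, gg ts f i)) i = h i"
      proof (cases "i < length ts")
        case True
        have "gg ts f i = snd (h i)" using ggeq[OF True] by blast
        then show ?thesis using True sgeq[of i] ssi[OF True] by (simp add: prod_eq_iff)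
      next
        case False
        then show ?thesis using PiE_arb[OF h] by simp
      qed
    qed
    have "sg ts f = \<sigma>" using sgeq by blast
    then show "Psi ts (Phi ts x) = x" unfolding x Ph Psi_def using hh by simp
  qed
  show "\<forall>y\<in>Pairs (PNode ts). Phi ts (Psi ts y) = y"
  proof
    fix y assume "y \<in> Pairs (PNode ts)"
    then obtain s f where y: "y = (s, f)" and fI: "f \<in> Iso (PNode ts) s" by (auto simp: Pairs_def)
    have sp: "sg ts f permutes {..<length ts}" by (rule sg_permutes[OF fI])
    have lc: "length (children s) = length ts" by (rule len_children[OF fI])
    have m: "map (\<lambda>j. fst ((\<lambda>i\<in>{..<length ts}. (children s ! sg ts f i, gg ts f i)) (inv (sg ts f) j))) [0..<length ts]
       = children s"
    proof (rule nth_equalityI)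
      fix j assume "j < length (map (\<lambda>j. fst ((\<lambda>i\<in>{..<length ts}. (children s ! sg ts f i, gg ts f i)) (inv (sg ts f) j))) [0..<length ts])"
      then have j: "j < length ts" by simp
      have "inv (sg ts f) j < length ts" using permutes_in_image[OF permutes_inv[OF sp]] j by simp
      then show "map (\<lambda>j. fst ((\<lambda>i\<in>{..<length ts}. (children s ! sg ts f i, gg ts f i)) (inv (sg ts f) j))) [0..<length ts] ! j = children s ! j"
        using j permutes_inverses(1)[OF sp] by simp
    qed (simp add: lc)
    have ff: "FF ts (sg ts f) (\<lambda>i. snd ((\<lambda>i\<in>{..<length ts}. (children s ! sg ts f i, gg ts f i)) i)) = f"
    proof
      fix q show "FF ts (sg ts f) (\<lambda>i. snd ((\<lambda>i\<in>{..<length ts}. (children s ! sg ts f i, gg ts f i)) i)) q = f q"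
        using f_eq[OF fI, of q] by (auto simp: FF_def split: list.splits)
    qed
    show "Phi ts (Psi ts y) = y" using y m ff s_shape[OF fI, symmetric] by (simp add: Phi_def Psi_def)
  qed
  show "Phi ts ` DD ts \<subseteq> Pairs (PNode ts)"
  proof
    fix y assume "y \<in> Phi ts ` DD ts"
    then obtain \<sigma> h where y: "y = Phi ts (\<sigma>, h)" and sp: "\<sigma> permutes {..<length ts}"
      and h: "h \<in> (\<Pi>\<^sub>E i\<in>{..<length ts}. Pairs (ts!i))" by (auto simp: DD_def)
    show "y \<in> Pairs (PNode ts)" using Phi_in(1)[OF sp h] unfolding y Pairs_def by (simp add: case_prod_beta)
  qed
  show "Psi ts ` Pairs (PNode ts) \<subseteq> DD ts"
  proof
    fix x assume "x \<in> Psi ts ` Pairs (PNode ts)"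
    then obtain s f where x: "x = Psi ts (s, f)" and fI: "f \<in> Iso (PNode ts) s" by (auto simp: Pairs_def)
    show "x \<in> DD ts" using x sg_permutes[OF fI] gg_Iso[OF fI]
      by (auto simp: DD_def Psi_def Pairs_def)
  qed
qed

fun KK :: "ptree \<Rightarrow> nat" where
  "KK (PNode ts) = fact (length ts) * prod_list (map KK ts)"

lemma KK_PNode: "KK (PNode ts) = fact (length ts) * (\<Prod>i<length ts. KK (ts!i))"
  unfolding KK.simps prod.list_conv_set_nth atLeast0LessThan by simp

lemma Pairs_card: "finite (Pairs t) \<and> card (Pairs t) = KK t"
proof (induction t)
  case (PNode ts)
  have fin: "finite (Pairs (ts!i))" and cd: "card (Pairs (ts!i)) = KK (ts!i)" if "i < length ts" for i
    using PNode that by auto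
  have finD: "finite (DD ts)" using fin
    by (auto simp: DD_def intro!: finite_PiE finite_permutations)
  have "card (DD ts) = fact (length ts) * (\<Prod>i<length ts. card (Pairs (ts!i)))"
    by (simp add: DD_def card_cartesian_product card_PiE card_permutations)
  also have "(\<Prod>i<length ts. card (Pairs (ts!i))) = (\<Prod>i<length ts. KK (ts!i))"
    using cd by (intro prod.cong) auto
  finally have cD: "card (DD ts) = KK (PNode ts)" by (simp only: KK_PNode)
  show ?case using Phi_bij[of ts] finD cD bij_betw_finite bij_betw_same_card by metis
qed


definition Cls :: "ptree \<Rightarrow> ptree set" where "Cls t = {s. Iso t s \<noteq> {}}"

lemma Pairs_Sigma: "Pairs t = Sigma (Cls t) (Iso t)"
  by (auto simp: Pairs_def Cls_def)

lemma finite_Cls: "finite (Cls t)"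
proof -
  have "Cls t \<subseteq> fst ` Pairs t" by (auto simp: Cls_def Pairs_def image_iff)
  moreover have "finite (fst ` Pairs t)" using Pairs_card by blast
  ultimately show ?thesis by (rule finite_subset)
qed

lemma finite_Iso: "finite (Iso t s)"
proof -
  have "Iso t s \<subseteq> snd ` Pairs t" by (auto simp: Pairs_def image_iff)
  moreover have "finite (snd ` Pairs t)" using Pairs_card by blast
  ultimately show ?thesis by (rule finite_subset)
qed

lemma Iso_ne_TK: "Iso s t \<noteq> {} \<longleftrightarrow> (\<exists>f. TK s t f)"
  using ex_tree_iso_Iso tree_iso_TK by blast

lemma Iso_sym: assumes "Iso s t \<noteq> {}" shows "Iso t s \<noteq> {}"
proof -
  obtain f where "TK s t f" using assms Iso_ne_TK by blast
  then have "TK t s (inv_into (pos s) f)" by (rule TK_inv)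
  then show ?thesis using Iso_ne_TK by blast
qed

lemma Iso_trans: assumes "Iso s t \<noteq> {}" "Iso t u \<noteq> {}" shows "Iso s u \<noteq> {}"
proof -
  obtain f where f: "TK s t f" using assms(1) Iso_ne_TK by blast
  obtain g where g: "TK t u g" using assms(2) Iso_ne_TK by blast
  have "TK s u (g \<circ> f)" using f g by (rule TK_comp)
  then show ?thesis using Iso_ne_TK by blast
qed

lemma Iso_refl: "Iso t t \<noteq> {}" using id_Iso by blast

lemma KK_card: "KK t = card (Cls t) * card (Iso t t)"
proof -
  have "KK t = card (Sigma (Cls t) (Iso t))" using Pairs_card[of t] unfolding Pairs_Sigma by simp
  also have "\<dots> = (\<Sum>s\<in>Cls t. card (Iso t s))" using finite_Cls finite_Iso by simp
  also have "\<dots> = (\<Sum>s\<in>Cls t. card (Iso t t))"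
  proof (rule sum.cong[OF refl])
    fix s assume "s \<in> Cls t"
    then obtain h where "h \<in> Iso t s" by (auto simp: Cls_def)
    then show "card (Iso t s) = card (Iso t t)" by (rule card_Iso_Aut)
  qed
  finally show ?thesis by simp
qed

lemma nleaves_pos: "nleaves t \<ge> 1"
proof (induction t)
  case (PNode ts)
  show ?case
  proof (cases ts)
    case (Cons t0 ts')
    have "nleaves (ts!0) \<ge> 1" using PNode Cons by simp
    moreover have "nleaves (ts!0) \<le> (\<Sum>i<length ts. nleaves (ts!i))"
      by (rule member_le_sum) (auto simp: Cons)
    ultimately show ?thesis by (simp add: nleaves_PNode Cons)
  qed (simp add: nleaves_PNode)
qed

lemma invariants:
  "Iso t s \<noteq> {} \<Longrightarrow> nleaves s = nleaves t \<and> nverts s = nverts t \<and>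
     (valid_rtree s \<longleftrightarrow> valid_rtree t) \<and> KK s = KK t"
proof (induction t arbitrary: s)
  case (PNode ts)
  obtain f where "f \<in> Iso (PNode ts) s" using PNode.prems by blast
  from Iso_PNode_struct[OF this] obtain ss \<sigma> where s: "s = PNode ss" and len: "length ss = length ts"
    and sp: "\<sigma> permutes {..<length ts}" and iso: "\<And>i. i < length ts \<Longrightarrow> Iso (ts!i) (ss ! \<sigma> i) \<noteq> {}"
    by blast
  have IH: "i < length ts \<Longrightarrow> nleaves (ss ! \<sigma> i) = nleaves (ts!i) \<and> nverts (ss ! \<sigma> i) = nverts (ts!i) \<and>
     (valid_rtree (ss ! \<sigma> i) \<longleftrightarrow> valid_rtree (ts!i)) \<and> KK (ss ! \<sigma> i) = KK (ts!i)" for i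
    using PNode.IH[OF nth_mem iso] by blast
  have perm_sum: "(\<Sum>j<length ts. g (ss!j)) = (\<Sum>i<length ts. g (ss ! \<sigma> i))" for g :: "ptree \<Rightarrow> nat"
    using sum.permute[OF sp, of "\<lambda>j. g (ss!j)"] by (simp add: comp_def)
  have perm_prod: "(\<Prod>j<length ts. g (ss!j)) = (\<Prod>i<length ts. g (ss ! \<sigma> i))" for g :: "ptree \<Rightarrow> nat"
    using prod.permute[OF sp, of "\<lambda>j. g (ss!j)"] by (simp add: comp_def)
  have e0: "ss = [] \<longleftrightarrow> ts = []" using len by auto
  have nl: "nleaves s = nleaves (PNode ts)"
    unfolding s nleaves_PNode len perm_sum e0 using IH by simp
  have nv: "nverts s = nverts (PNode ts)"
    unfolding s nverts_PNode len perm_sum e0 using IH by simp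
  have kk: "KK s = KK (PNode ts)"
    unfolding s KK_PNode len perm_prod using IH by simp
  have "(\<forall>j<length ts. valid_rtree (ss!j)) \<longleftrightarrow> (\<forall>i<length ts. valid_rtree (ss ! \<sigma> i))"
  proof
    assume "\<forall>j<length ts. valid_rtree (ss!j)"
    then show "\<forall>i<length ts. valid_rtree (ss ! \<sigma> i)" using permutes_in_image[OF sp] by auto
  next
    assume h: "\<forall>i<length ts. valid_rtree (ss ! \<sigma> i)"
    show "\<forall>j<length ts. valid_rtree (ss!j)"
    proof (intro allI impI)
      fix j assume j: "j < length ts"
      have "inv \<sigma> j < length ts" using permutes_in_image[OF permutes_inv[OF sp]] j by simp
      then show "valid_rtree (ss!j)" using h permutes_inverses(1)[OF sp] by metis
    qed
  qed
  then have va: "valid_rtree s \<longleftrightarrow> valid_rtree (PNode ts)"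
    unfolding s valid_PNode len using IH by simp
  show ?case using nl nv kk va by blast
qed

definition WW :: "ptree \<Rightarrow> real" where
  "WW s = (-1) ^ nverts s / real (KK s)"

lemma class_sum:
  "(-1) ^ nverts t / real (card (Aut t)) = (\<Sum>s\<in>Cls t. WW s)"
proof -
  have "(\<Sum>s\<in>Cls t. WW s) = (\<Sum>s\<in>Cls t. (-1) ^ nverts t / real (KK t))"
  proof (rule sum.cong[OF refl])
    fix s assume "s \<in> Cls t"
    then have "Iso t s \<noteq> {}" by (simp add: Cls_def)
    from invariants[OF this] show "WW s = (-1) ^ nverts t / real (KK t)" by (simp add: WW_def)
  qed
  also have "\<dots> = real (card (Cls t)) * ((-1) ^ nverts t / real (KK t))" by simp
  also have "\<dots> = (-1) ^ nverts t / real (card (Aut t))"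
  proof -
    have "t \<in> Cls t" using Iso_refl by (simp add: Cls_def)
    then have c1: "card (Cls t) \<noteq> 0" using finite_Cls[of t] by (metis card_0_eq empty_iff)
    have c2: "card (Iso t t) \<noteq> 0" using finite_Iso id_Iso by (metis card_0_eq empty_iff)
    show ?thesis unfolding KK_card Aut_Iso using c1 c2 by (simp add: field_simps)
  qed
  finally show ?thesis by simp
qed


lemma iso_rel_Iso: "(s, t) \<in> iso_rel \<longleftrightarrow> valid_rtree s \<and> valid_rtree t \<and> Iso s t \<noteq> {}"
  by (simp add: iso_rel_def ex_tree_iso_Iso)

lemma class_eq: assumes "valid_rtree t" shows "iso_rel `` {t} = Cls t"
proof -
  have h: "f \<in> Iso t s \<Longrightarrow> valid_rtree s" for f s using invariants[of t s] assms by blast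
  show ?thesis using assms by (auto simp: iso_rel_Iso Cls_def dest: h)
qed

lemma Cls_eq: "s \<in> Cls t \<Longrightarrow> Cls s = Cls t"
  unfolding Cls_def using Iso_sym Iso_trans by blast

lemma classes_char: "C \<in> rtree_classes \<longleftrightarrow> (\<exists>t. valid_rtree t \<and> C = Cls t)"
  unfolding rtree_classes_def quotient_def using class_eq by auto

lemma rep_props:
  assumes "C \<in> rtree_classes"
  shows "rep C \<in> C" "Cls (rep C) = C" "valid_rtree (rep C)"
proof -
  obtain t where t: "valid_rtree t" "C = Cls t" using assms classes_char by blast
  have "t \<in> C" using t Iso_refl by (simp add: Cls_def)
  then show r: "rep C \<in> C" unfolding rep_def by (rule someI)
  then show "Cls (rep C) = C" using t Cls_eq by blast
  show "valid_rtree (rep C)" using r t invariants by (auto simp: Cls_def)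
qed

lemma finite_le: "finite {t. valid_rtree t \<and> nleaves t \<le> n}"
proof (induction n)
  case 0
  then show ?case using nleaves_pos by (metis (no_types, lifting) Collect_empty_eq finite.emptyI le_zero_eq not_one_le_zero)
next
  case (Suc n)
  let ?B = "{t. valid_rtree t \<and> nleaves t \<le> n}"
  have "{t. valid_rtree t \<and> nleaves t \<le> Suc n} \<subseteq> insert (PNode []) (PNode ` {ts. set ts \<subseteq> ?B \<and> length ts \<le> Suc n})"
  proof
    fix t assume t: "t \<in> {t. valid_rtree t \<and> nleaves t \<le> Suc n}"
    obtain ts where tt: "t = PNode ts" by (cases t)
    show "t \<in> insert (PNode []) (PNode ` {ts. set ts \<subseteq> ?B \<and> length ts \<le> Suc n})"
    proof (cases "ts = []")
      case True then show ?thesis using tt by simp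
    next
      case False
      have v1: "length ts \<noteq> 1" "\<And>i. i < length ts \<Longrightarrow> valid_rtree (ts!i)"
        using t tt False valid_PNode[of ts] by auto
      have "length ts \<noteq> 0" using False by simp
      then have v: "length ts \<ge> 2" "\<And>i. i < length ts \<Longrightarrow> valid_rtree (ts!i)" using v1 by arith+
      have sl: "(\<Sum>i<length ts. nleaves (ts!i)) \<le> Suc n" using t tt False by (simp add: nleaves_PNode)
      have "(\<Sum>i<length ts. 1) \<le> (\<Sum>i<length ts. nleaves (ts!i))"
        by (rule sum_mono) (rule nleaves_pos)
      then have l: "length ts \<le> Suc n" using sl by simp
      have "nleaves (ts!i) \<le> n" if i: "i < length ts" for i
      proof -
        have "(\<Sum>j<length ts. nleaves (ts!j)) = nleaves (ts!i) + (\<Sum>j\<in>{..<length ts} - {i}. nleaves (ts!j))"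
          using i by (subst sum.remove[of _ i]) auto
        moreover have "(\<Sum>j\<in>{..<length ts} - {i}. 1) \<le> (\<Sum>j\<in>{..<length ts} - {i}. nleaves (ts!j))"
          by (rule sum_mono) (rule nleaves_pos)
        moreover have "card ({..<length ts} - {i}) \<ge> 1" using i v(1) by simp
        ultimately show ?thesis using sl by simp
      qed
      then have "set ts \<subseteq> ?B" using v by (auto simp: in_set_conv_nth)
      then show ?thesis using tt l by auto
    qed
  qed
  moreover have "finite {ts. set ts \<subseteq> ?B \<and> length ts \<le> Suc n}"
    using Suc.IH by (rule finite_lists_length_le)
  ultimately show ?case by (meson finite_imageI finite_insert finite_subset)
qed

definition PP :: "nat \<Rightarrow> ptree set" where "PP n = {t. valid_rtree t \<and> nleaves t = n}"

lemma finite_PP: "finite (PP n)"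
  by (rule finite_subset[OF _ finite_le[of n]]) (auto simp: PP_def)

lemma coeff_eq: "rtree_gf $ n = (\<Sum>s\<in>PP n. WW s)"
proof -
  let ?A = "{C \<in> rtree_classes. nleaves (rep C) = n}"
  have cls_sub: "C \<subseteq> PP n" if "C \<in> ?A" for C
  proof
    fix s assume s: "s \<in> C"
    have C: "C \<in> rtree_classes" "nleaves (rep C) = n" using that by auto
    have "Iso (rep C) s \<noteq> {}" using s rep_props(2)[OF C(1)] by (auto simp: Cls_def)
    then show "s \<in> PP n" using invariants rep_props(3)[OF C(1)] C(2) by (auto simp: PP_def)
  qed
  have U: "\<Union>?A = PP n"
  proof
    show "\<Union>?A \<subseteq> PP n" using cls_sub by blast
    show "PP n \<subseteq> \<Union>?A"
    proof
      fix s assume s: "s \<in> PP n"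
      have C: "Cls s \<in> rtree_classes" using s classes_char by (auto simp: PP_def)
      have "rep (Cls s) \<in> Cls s" using rep_props(1)[OF C] .
      then have "nleaves (rep (Cls s)) = n" using invariants s by (auto simp: Cls_def PP_def)
      moreover have "s \<in> Cls s" using Iso_refl by (simp add: Cls_def)
      ultimately show "s \<in> \<Union>?A" using C by blast
    qed
  qed
  have finA: "finite ?A"
  proof -
    have "?A \<subseteq> Pow (PP n)" using cls_sub by blast
    then show ?thesis using finite_PP by (meson finite_Pow_iff finite_subset)
  qed
  have disj: "\<forall>C\<in>?A. \<forall>D\<in>?A. C \<noteq> D \<longrightarrow> C \<inter> D = {}"
  proof (intro ballI impI)
    fix C D assume C: "C \<in> ?A" and D: "D \<in> ?A" and ne: "C \<noteq> D"
    show "C \<inter> D = {}"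
    proof (rule ccontr)
      assume "C \<inter> D \<noteq> {}"
      then obtain s where s: "s \<in> C" "s \<in> D" by auto
      have "C = Cls s" using s(1) rep_props(2)[of C] C Cls_eq by (metis (mono_tags, lifting) mem_Collect_eq)
      moreover have "D = Cls s" using s(2) rep_props(2)[of D] D Cls_eq by (metis (mono_tags, lifting) mem_Collect_eq)
      ultimately show False using ne by simp
    qed
  qed
  have "rtree_gf $ n = (\<Sum>C\<in>?A. (-1) ^ nverts (rep C) / real (card (Aut (rep C))))"
    by (simp add: rtree_gf_def)
  also have "\<dots> = (\<Sum>C\<in>?A. \<Sum>s\<in>C. WW s)"
  proof (rule sum.cong[OF refl])
    fix C assume "C \<in> ?A"
    then have "C \<in> rtree_classes" by simp
    then show "(-1) ^ nverts (rep C) / real (card (Aut (rep C))) = (\<Sum>s\<in>C. WW s)"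
      using class_sum[of "rep C"] rep_props(2) by simp
  qed
  also have "\<dots> = (\<Sum>s\<in>\<Union>?A. WW s)"
  proof -
    have "\<forall>C\<in>?A. finite C" using cls_sub finite_PP finite_subset by blast
    from sum.Union_disjoint[OF this disj, of WW] show ?thesis by (simp add: comp_def)
  qed
  finally show ?thesis using U by simp
qed


definition LL :: "nat \<Rightarrow> nat \<Rightarrow> ptree list set" where
  "LL k n = {ts. length ts = k \<and> (\<forall>t\<in>set ts. valid_rtree t) \<and> sum_list (map nleaves ts) = n}"

lemma nleaves_le_sum: "t \<in> set ts \<Longrightarrow> nleaves t \<le> sum_list (map nleaves ts)"
  by (induction ts) auto

lemma finite_LL: "finite (LL k n)"
proof -
  have "LL k n \<subseteq> {ts. set ts \<subseteq> {t. valid_rtree t \<and> nleaves t \<le> n} \<and> length ts \<le> k}"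
    by (auto simp: LL_def dest: nleaves_le_sum)
  moreover have "finite {ts. set ts \<subseteq> {t. valid_rtree t \<and> nleaves t \<le> n} \<and> length ts \<le> k}"
    by (rule finite_lists_length_le[OF finite_le])
  ultimately show ?thesis by (rule finite_subset)
qed

lemma LL_0: "LL 0 n = (if n = 0 then {[]} else {})"
  by (auto simp: LL_def)

lemma LL_Suc_bij:
  "bij_betw (\<lambda>x. fst (snd x) # snd (snd x)) (SIGMA j:{0..n}. PP j \<times> LL k (n - j)) (LL (Suc k) n)"
proof (rule bij_betw_imageI)
  show "inj_on (\<lambda>x. fst (snd x) # snd (snd x)) (SIGMA j:{0..n}. PP j \<times> LL k (n - j))"
    by (rule inj_onI) (auto simp: PP_def)
  show "(\<lambda>x. fst (snd x) # snd (snd x)) ` (SIGMA j:{0..n}. PP j \<times> LL k (n - j)) = LL (Suc k) n"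
  proof
    show "(\<lambda>x. fst (snd x) # snd (snd x)) ` (SIGMA j:{0..n}. PP j \<times> LL k (n - j)) \<subseteq> LL (Suc k) n"
      by (auto simp: PP_def LL_def)
    show "LL (Suc k) n \<subseteq> (\<lambda>x. fst (snd x) # snd (snd x)) ` (SIGMA j:{0..n}. PP j \<times> LL k (n - j))"
    proof
      fix ts assume ts: "ts \<in> LL (Suc k) n"
      then obtain t us where tu: "ts = t # us" by (cases ts) (auto simp: LL_def)
      have "(nleaves t, t, us) \<in> (SIGMA j:{0..n}. PP j \<times> LL k (n - j))"
        using ts tu by (auto simp: PP_def LL_def)
      then show "ts \<in> (\<lambda>x. fst (snd x) # snd (snd x)) ` (SIGMA j:{0..n}. PP j \<times> LL k (n - j))"
        using tu by force
    qed
  qed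
qed

lemma pow_nth: "(rtree_gf ^ k) $ n = (\<Sum>ts\<in>LL k n. prod_list (map WW ts))"
proof (induction k arbitrary: n)
  case 0
  then show ?case by (simp add: LL_0)
next
  case (Suc k)
  have "(rtree_gf ^ Suc k) $ n = (\<Sum>j=0..n. rtree_gf $ j * (rtree_gf ^ k) $ (n - j))"
    by (simp add: fps_mult_nth)
  also have "\<dots> = (\<Sum>j=0..n. (\<Sum>t\<in>PP j. WW t) * (\<Sum>ts\<in>LL k (n - j). prod_list (map WW ts)))"
    by (simp add: coeff_eq Suc.IH)
  also have "\<dots> = (\<Sum>j=0..n. \<Sum>x\<in>PP j \<times> LL k (n - j). WW (fst x) * prod_list (map WW (snd x)))"
    by (simp add: sum_product sum.cartesian_product case_prod_beta)
  also have "\<dots> = (\<Sum>x\<in>(SIGMA j:{0..n}. PP j \<times> LL k (n - j)). WW (fst (snd x)) * prod_list (map WW (snd (snd x))))"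
    by (subst sum.Sigma) (auto simp: finite_PP finite_LL case_prod_beta)
  also have "\<dots> = (\<Sum>x\<in>(SIGMA j:{0..n}. PP j \<times> LL k (n - j)). prod_list (map WW (fst (snd x) # snd (snd x))))"
    by simp
  also have "\<dots> = (\<Sum>ts\<in>LL (Suc k) n. prod_list (map WW ts))"
    by (rule sum.reindex_bij_betw[OF LL_Suc_bij])
  finally show ?case .
qed

lemma WW_PNode:
  assumes "ts \<noteq> []"
  shows "WW (PNode ts) = - prod_list (map WW ts) / fact (length ts)"
proof -
  have pl: "prod_list (map WW ts) = (\<Prod>i<length ts. WW (ts!i))"
    unfolding prod.list_conv_set_nth atLeast0LessThan by simp
  have "WW (PNode ts) = (-1) ^ (1 + (\<Sum>i<length ts. nverts (ts!i))) / (fact (length ts) * (\<Prod>i<length ts. real (KK (ts!i))))"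
    using assms by (simp add: WW_def nverts_PNode KK_PNode of_nat_prod del: KK.simps)
  also have "\<dots> = - (\<Prod>i<length ts. (-1) ^ nverts (ts!i)) / (fact (length ts) * (\<Prod>i<length ts. real (KK (ts!i))))"
    by (simp add: power_add power_sum)
  also have "\<dots> = - (\<Prod>i<length ts. WW (ts!i)) / fact (length ts)"
    by (simp add: WW_def prod_dividef)
  finally show ?thesis using pl by simp
qed

lemma PP_split: "PP n = (if n = 1 then {PNode []} else {}) \<union> PNode ` (\<Union>k\<in>{2..n}. LL k n)"
proof (intro set_eqI iffI)
  fix s assume s: "s \<in> PP n"
  obtain ts where st: "s = PNode ts" by (cases s)
  show "s \<in> (if n = 1 then {PNode []} else {}) \<union> PNode ` (\<Union>k\<in>{2..n}. LL k n)"
  proof (cases "ts = []")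
    case True
    then show ?thesis using s st by (simp add: PP_def nleaves_PNode)
  next
    case False
    have v1: "length ts \<noteq> 1" "\<forall>t\<in>set ts. valid_rtree t" using s st by (auto simp: PP_def valid_PNode in_set_conv_nth)
    have "length ts \<noteq> 0" using False by simp
    then have l2: "length ts \<ge> 2" using v1 by arith
    have sl: "sum_list (map nleaves ts) = n" using s st False
      by (simp add: PP_def nleaves_PNode sum_list_sum_nth atLeast0LessThan)
    have "length ts \<le> sum_list (map nleaves ts)"
    proof -
      have "(\<Sum>i<length ts. 1) \<le> (\<Sum>i<length ts. nleaves (ts!i))"
        by (rule sum_mono) (rule nleaves_pos)
      then show ?thesis by (simp add: sum_list_sum_nth atLeast0LessThan)
    qed
    then have "ts \<in> (\<Union>k\<in>{2..n}. LL k n)" using l2 sl v1 by (auto simp: LL_def)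
    then show ?thesis using st by blast
  qed
next
  fix s assume s: "s \<in> (if n = 1 then {PNode []} else {}) \<union> PNode ` (\<Union>k\<in>{2..n}. LL k n)"
  show "s \<in> PP n"
  proof (cases "s = PNode [] \<and> n = 1")
    case True
    then show ?thesis by (simp add: PP_def nleaves_PNode valid_PNode)
  next
    case False
    then obtain k ts where k: "k \<in> {2..n}" and ts: "ts \<in> LL k n" and st: "s = PNode ts"
      using s by (auto split: if_splits)
    have "ts \<noteq> []" using k ts by (auto simp: LL_def)
    then show ?thesis using k ts st
      by (auto simp: PP_def LL_def valid_PNode nleaves_PNode sum_list_sum_nth atLeast0LessThan)
  qed
qed

lemma gf_rec: "rtree_gf $ n = (if n = 1 then 1 else 0) - (\<Sum>k=2..n. (rtree_gf ^ k) $ n / fact k)"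
proof -
  have disj1: "(if n = 1 then {PNode []} else {}) \<inter> PNode ` (\<Union>k\<in>{2..n}. LL k n) = {}"
    by (auto simp: LL_def)
  have fin: "finite (\<Union>k\<in>{2..n}. LL k n)" by (auto simp: finite_LL)
  have "rtree_gf $ n = (\<Sum>s\<in>PP n. WW s)" by (rule coeff_eq)
  also have "\<dots> = (if n = 1 then 1 else 0) + (\<Sum>s\<in>PNode ` (\<Union>k\<in>{2..n}. LL k n). WW s)"
    unfolding PP_split using disj1 fin by (subst sum.union_disjoint) (auto simp: WW_def KK_PNode nverts_PNode)
  also have "(\<Sum>s\<in>PNode ` (\<Union>k\<in>{2..n}. LL k n). WW s) = (\<Sum>ts\<in>(\<Union>k\<in>{2..n}. LL k n). WW (PNode ts))"
    using sum.reindex[of PNode "\<Union>k\<in>{2..n}. LL k n" WW] by (simp add: inj_on_def comp_def)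
  also have "\<dots> = (\<Sum>k=2..n. \<Sum>ts\<in>LL k n. WW (PNode ts))"
    apply (rule sum.UNION_disjoint)
      apply simp
     apply (simp add: finite_LL)
    apply (auto simp: LL_def)
    done
  also have "\<dots> = (\<Sum>k=2..n. - (rtree_gf ^ k) $ n / fact k)"
  proof (rule sum.cong[OF refl])
    fix k assume k: "k \<in> {2..n}"
    have "(\<Sum>ts\<in>LL k n. WW (PNode ts)) = (\<Sum>ts\<in>LL k n. - prod_list (map WW ts) / fact k)"
    proof (rule sum.cong[OF refl])
      fix ts assume ts: "ts \<in> LL k n"
      then have "ts \<noteq> []" "length ts = k" using k by (auto simp: LL_def)
      then show "WW (PNode ts) = - prod_list (map WW ts) / fact k" using WW_PNode by simp
    qed
    also have "\<dots> = - (rtree_gf ^ k) $ n / fact k"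
      by (simp add: pow_nth sum_divide_distrib sum_negf)
    finally show "(\<Sum>ts\<in>LL k n. WW (PNode ts)) = - (rtree_gf ^ k) $ n / fact k" .
  qed
  finally show ?thesis by (simp add: sum_negf)
qed

lemma gf_0: "rtree_gf $ 0 = 0"
  using gf_rec[of 0] by simp

lemma gf_1: "rtree_gf $ 1 = 1"
  using gf_rec[of 1] by simp

lemma exp_comp: "(fps_exp (1::real) - 1) oo rtree_gf = fps_X"
proof (rule fps_ext)
  fix n
  show "((fps_exp (1::real) - 1) oo rtree_gf) $ n = fps_X $ n"
  proof (cases "n = 0")
    case True then show ?thesis by simp
  next
    case False
    have "((fps_exp (1::real) - 1) oo rtree_gf) $ n = (\<Sum>i=0..n. (fps_exp (1::real) - 1) $ i * (rtree_gf ^ i) $ n)"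
      by (rule fps_compose_nth)
    also have "\<dots> = (\<Sum>i=1..n. (rtree_gf ^ i) $ n / fact i)"
    proof -
      have "(\<Sum>i=0..n. (fps_exp (1::real) - 1) $ i * (rtree_gf ^ i) $ n) = (\<Sum>i=Suc 0..n. (fps_exp (1::real) - 1) $ i * (rtree_gf ^ i) $ n)"
        by (simp add: sum.atLeast_Suc_atMost)
      also have "\<dots> = (\<Sum>i=1..n. (rtree_gf ^ i) $ n / fact i)"
        by (intro sum.cong refl) auto
      finally show ?thesis .
    qed
    also have "\<dots> = rtree_gf $ n + (\<Sum>i=2..n. (rtree_gf ^ i) $ n / fact i)"
      using False by (simp add: sum.atLeast_Suc_atMost numeral_2_eq_2)
    also have "\<dots> = (if n = 1 then 1 else 0)"
      by (subst gf_rec) simp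
    also have "\<dots> = fps_X $ n" by (simp add: fps_X_def)
    finally show ?thesis .
  qed
qed

lemma gf_ln: "rtree_gf = fps_ln 1"
proof -
  let ?b = "fps_exp (1::real) - 1"
  have b0: "?b $ 0 = 0" by simp
  have b1: "?b $ 1 \<noteq> 0" by simp
  have "fps_inv ?b oo (?b oo rtree_gf) = fps_inv ?b oo ?b oo rtree_gf"
    by (rule fps_compose_assoc[OF gf_0 b0])
  then have "fps_inv ?b = fps_X oo rtree_gf"
    unfolding exp_comp fps_inv[OF b0 b1] by simp
  then have "fps_inv ?b = rtree_gf" using gf_0 by simp
  then show ?thesis using fps_ln_fps_exp_inv[of "1::real"] by simp
qed


theorem proposition4p1:
  shows "rtree_gf = fps_ln 1 \<and>
         rtree_gf = Abs_fps (\<lambda>n. if n = 0 then 0 else (-1) ^ (n + 1) / real n)"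
proof
  show "rtree_gf = fps_ln 1" by (rule gf_ln)
  show "rtree_gf = Abs_fps (\<lambda>n. if n = 0 then 0 else (-1) ^ (n + 1) / real n)"
  proof (rule fps_ext)
    fix n
    show "rtree_gf $ n = Abs_fps (\<lambda>n. if n = 0 then 0 else (-1) ^ (n + 1) / real n) $ n"
    proof (cases n)
      case 0 then show ?thesis by (simp add: gf_0)
    next
      case (Suc m)
      have "(-1::real) ^ (n + 1) = (-1) ^ (n - 1)" using Suc by simp
      then show ?thesis unfolding gf_ln by (simp add: fps_ln_nth)
    qed
  qed
qed

end
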